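(* Let $\varphi\in H^\infty$ be saturated. Then $I\varphi$ is saturated for every inner function $I$.
   Context: $\mathbb{T}$ is the unit circle; $H^\infty$ is the space of bounded functions on $\mathbb{T}$ with Fourier coefficients supported on $\{0,1,2,\dots\}$, and $H^\infty_0$ is the subspace of $H^\infty$ of functions vanishing at the origin (zero mean). An inner function is $I\in H^\infty$ with $|I|=1$ a.e. on $\mathbb{T}$. A function $\varphi\in H^\infty$ is saturated if $\|\varphi\|_\infty = \inf_{f\in H^\infty_0}\|\varphi-\overline{f}\|_\infty$. *)

theory Defs
  imports "HOL-Analysis.Analysis" "HOL-Probability.Essential_Supremum"
begin

text \<open>The unit circle T is parametrised by t in [0, 2 pi] (via t maps to e^{it}),
  with normalised-up-to-constant Lebesgue measure. Functions on T are
  functions real to complex, considered on [0, 2 pi].\<close>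

definition circ :: "real measure" where
  "circ = lebesgue_on {0..2*pi}"

definition sup_norm :: "(real \<Rightarrow> complex) \<Rightarrow> ereal" where
  "sup_norm f = esssup circ (\<lambda>t. ereal (cmod (f t)))"

definition fourier_coeff :: "(real \<Rightarrow> complex) \<Rightarrow> int \<Rightarrow> complex" where
  "fourier_coeff f n =
     complex_of_real (1 / (2*pi)) * (LINT t|circ. f t * cis (- (real_of_int n * t)))"

definition Linf :: "(real \<Rightarrow> complex) set" where
  "Linf = {f. f \<in> borel_measurable circ \<and> sup_norm f < \<infinity>}"

definition Hinf :: "(real \<Rightarrow> complex) set" where
  "Hinf = {f \<in> Linf. \<forall>n::int. n < 0 \<longrightarrow> fourier_coeff f n = 0}"

definition Hinf0 :: "(real \<Rightarrow> complex) set" where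
  "Hinf0 = {f \<in> Hinf. fourier_coeff f 0 = 0}"

definition inner_fun :: "(real \<Rightarrow> complex) \<Rightarrow> bool" where
  "inner_fun I \<longleftrightarrow> I \<in> Hinf \<and> (AE t in circ. cmod (I t) = 1)"

definition saturated :: "(real \<Rightarrow> complex) \<Rightarrow> bool" where
  "saturated \<phi> \<longleftrightarrow>
     sup_norm \<phi> = (INF f\<in>Hinf0. sup_norm (\<lambda>t. \<phi> t - cnj (f t)))"

end

theory Submission
  imports Defs
begin


definition tp :: "(complex \<times> int) list \<Rightarrow> real \<Rightarrow> complex" where
  "tp L t = (\<Sum>(c,m)\<leftarrow>L. c * cis (of_int m * t))"

lemma tp_Nil[simp]: "tp [] t = 0" by (simp add: tp_def)
lemma tp_Cons[simp]: "tp ((c,m)#L) t = c * cis (of_int m * t) + tp L t" by (simp add: tp_def)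
lemma tp_append[simp]: "tp (L1 @ L2) t = tp L1 t + tp L2 t" by (simp add: tp_def)

definition tpmul :: "(complex \<times> int) list \<Rightarrow> (complex \<times> int) list \<Rightarrow> (complex \<times> int) list" where
  "tpmul L1 L2 = concat (map (\<lambda>(c,m). map (\<lambda>(d,n). (c*d, m+n)) L2) L1)"

lemma tp_scale: "tp (map (\<lambda>(d,n). (c*d, m+n)) L2) t = c * cis (of_int m * t) * tp L2 t"
  by (induction L2) (auto simp: algebra_simps cis_mult)

lemma tp_mul: "tp (tpmul L1 L2) t = tp L1 t * tp L2 t"
  by (induction L1) (auto simp: tpmul_def tp_scale algebra_simps)

lemma tp_rpoly:
  fixes p :: "complex \<Rightarrow> real"
  assumes "real_polynomial_function p"
  shows "\<exists>L. \<forall>t. complex_of_real (p (cis t)) = tp L t"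
  using assms
proof (induction p rule: real_polynomial_function.induct)
  case (linear f)
  then interpret bounded_linear f .
  have eq: "f z = Re z * f 1 + Im z * f \<i>" for z
  proof -
    have "z = Re z *\<^sub>R 1 + Im z *\<^sub>R \<i>" by (simp add: complex_eq_iff)
    then have "f z = f (Re z *\<^sub>R 1 + Im z *\<^sub>R \<i>)" by simp
    also have "\<dots> = Re z * f 1 + Im z * f \<i>" by (simp add: add scale)
    finally show ?thesis .
  qed
  let ?a = "complex_of_real (f 1)" and ?b = "complex_of_real (f \<i>)"
  show ?case
  proof (intro exI allI)
    fix t
    have *: "complex_of_real (cos t * x + sin t * y) = (complex_of_real x/2 - \<i>*complex_of_real y/2) * cis t + (complex_of_real x/2 + \<i>*complex_of_real y/2) * cis (- t)" for x y
      by (simp add: complex_eq_iff field_simps)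
    show "complex_of_real (f (cis t)) = tp [(?a/2 - \<i>*?b/2, 1), (?a/2 + \<i>*?b/2, -1)] t"
      using *[of "f 1" "f \<i>"] eq[of "cis t"] by (simp add: mult.commute)
  qed
next
  case (const c)
  show ?case by (rule exI[of _ "[(complex_of_real c, 0)]"]) simp
next
  case (add f g)
  then obtain L1 L2 where "\<forall>t. complex_of_real (f (cis t)) = tp L1 t" "\<forall>t. complex_of_real (g (cis t)) = tp L2 t" by blast
  then show ?case by (intro exI[of _ "L1 @ L2"]) simp
next
  case (mult f g)
  then obtain L1 L2 where "\<forall>t. complex_of_real (f (cis t)) = tp L1 t" "\<forall>t. complex_of_real (g (cis t)) = tp L2 t" by blast
  then show ?case by (intro exI[of _ "tpmul L1 L2"]) (simp add: tp_mul)
qed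

lemma tp_poly:
  fixes g :: "complex \<Rightarrow> complex"
  assumes "polynomial_function g"
  shows "\<exists>L. \<forall>t. g (cis t) = tp L t"
proof -
  have "real_polynomial_function (Re \<circ> g)" "real_polynomial_function (Im \<circ> g)"
    using assms bounded_linear_Re bounded_linear_Im unfolding polynomial_function_def by blast+
  then obtain L1 L2 where L1: "\<forall>t. complex_of_real (Re (g (cis t))) = tp L1 t"
     and L2: "\<forall>t. complex_of_real (Im (g (cis t))) = tp L2 t"
    using tp_rpoly[of "Re \<circ> g"] tp_rpoly[of "Im \<circ> g"] by auto
  show ?thesis
  proof (intro exI allI)
    fix t
    have "g (cis t) = complex_of_real (Re (g (cis t))) + \<i> * complex_of_real (Im (g (cis t)))"
      by (simp add: complex_eq_iff)
    also have "\<dots> = tp (L1 @ tpmul [(\<i>,0)] L2) t" by (simp add: L1 L2 tp_mul)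
    finally show "g (cis t) = tp (L1 @ tpmul [(\<i>,0)] L2) t" .
  qed
qed



lemma circle_cont:
  fixes h :: "real \<Rightarrow> complex"
  assumes hc: "continuous_on {0..2*pi} h" and h0: "h 0 = 0" and h2: "h (2*pi) = 0"
  defines "G \<equiv> (\<lambda>z. if z = 1 then 0 else h (Arg2pi z))"
  shows "continuous_on (sphere 0 1) G"
proof (clarsimp simp: continuous_on_eq_continuous_within)
  fix z :: complex assume z: "cmod z = 1"
  show "continuous (at z within sphere 0 1) G"
  proof (cases "z = 1")
    case False
    have nr: "z \<notin> \<real>\<^sub>\<ge>\<^sub>0"
    proof
      assume "z \<in> \<real>\<^sub>\<ge>\<^sub>0"
      then have "Re z \<ge> 0" "Im z = 0" by (auto simp: complex_nonneg_Reals_iff)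
      with z False show False by (simp add: complex_eq_iff cmod_def)
    qed
    have c1: "continuous (at z within sphere 0 1) Arg2pi"
      using continuous_at_Arg2pi[OF nr] continuous_at_imp_continuous_at_within by blast
    have sub: "Arg2pi ` sphere 0 1 \<subseteq> {0..2*pi}" using Arg2pi less_imp_le by fastforce
    have "Arg2pi z \<in> {0..2*pi}" using Arg2pi[of z] by auto
    then have c2: "continuous (at (Arg2pi z) within Arg2pi ` sphere 0 1) h"
      using hc sub continuous_on_eq_continuous_within continuous_within_subset by blast
    have c3: "continuous (at z within sphere 0 1) (h \<circ> Arg2pi)"
      by (rule continuous_within_compose[OF c1 c2])
    show ?thesis
    proof (rule continuous_transform_within[OF c3, of "dist z 1"])
      show "0 < dist z 1" using False by simp
      show "z \<in> sphere 0 1" using z by simp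
      show "(h \<circ> Arg2pi) x' = G x'" if "x' \<in> sphere 0 1" "dist x' z < dist z 1" for x'
        using that by (auto simp: G_def dist_commute)
    qed
  next
    case True
    show ?thesis unfolding True continuous_within_eps_delta
    proof (intro allI impI)
      fix e :: real assume e: "e > 0"
      have "continuous (at 0 within {0..2*pi}) h" using hc continuous_on_eq_continuous_within
        by (metis atLeastAtMost_iff order_refl pi_ge_zero zero_le_mult_iff zero_le_numeral)
      then obtain d1 where d1: "d1 > 0" "\<forall>t\<in>{0..2*pi}. dist t 0 < d1 \<longrightarrow> dist (h t) (h 0) < e"
        using e unfolding continuous_within_eps_delta by blast
      have "continuous (at (2*pi) within {0..2*pi}) h" using hc continuous_on_eq_continuous_within
        by (metis atLeastAtMost_iff order_refl pi_ge_zero zero_le_mult_iff zero_le_numeral)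
      then obtain d2 where d2: "d2 > 0" "\<forall>t\<in>{0..2*pi}. dist t (2*pi) < d2 \<longrightarrow> dist (h t) (h (2*pi)) < e"
        using e unfolding continuous_within_eps_delta by blast
      define \<eta> where "\<eta> = min (min d1 d2) pi"
      have eta: "\<eta> > 0" "\<eta> \<le> d1" "\<eta> \<le> d2" "\<eta> \<le> pi" using d1 d2 pi_gt_zero by (auto simp: \<eta>_def)
      define K where "K = cis ` {\<eta>..2*pi-\<eta>}"
      have "compact K" unfolding K_def
        by (intro compact_continuous_image continuous_intros) auto
      then have cK: "closed K" by (rule compact_imp_closed)
      have "1 \<notin> K"
      proof
        assume "1 \<in> K"
        then obtain t where t: "t \<in> {\<eta>..2*pi-\<eta>}" "cis t = 1" by (auto simp: K_def)
        then have "Arg2pi (exp (\<i> * complex_of_real t)) = Im (\<i> * complex_of_real t)"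
          using eta by (intro Arg2pi_exp) auto
        with t have "t = 0" using Arg2pi_eq_0[of 1] by (simp add: cis_conv_exp)
        with t eta show False by auto
      qed
      then obtain d where d: "d > 0" "\<forall>x\<in>K. d \<le> dist 1 x"
        using separate_point_closed[OF cK] by blast
      show "\<exists>d>0. \<forall>x'\<in>sphere 0 1. dist x' 1 < d \<longrightarrow> dist (G x') (G 1) < e"
      proof (intro exI[of _ d] conjI ballI impI)
        show "d > 0" by fact
        fix x :: complex assume x: "x \<in> sphere 0 1" "dist x 1 < d"
        show "dist (G x) (G 1) < e"
        proof (cases "x = 1")
          case True then show ?thesis using e by (simp add: G_def)
        next
          case False
          let ?t = "Arg2pi x"
          have "cis ?t = x" using x complex_norm_eq_1_exp[of x] by (simp add: cis_conv_exp)
          have "?t \<notin> {\<eta>..2*pi-\<eta>}"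
          proof
            assume "?t \<in> {\<eta>..2*pi-\<eta>}"
            then have "d \<le> dist 1 (cis ?t)" using d by (auto simp: K_def)
            then show False using x \<open>cis ?t = x\<close> by (simp add: dist_commute)
          qed
          moreover have t02: "?t \<in> {0..2*pi}" using Arg2pi[of x] by auto
          ultimately have "?t < \<eta> \<or> ?t > 2*pi - \<eta>" by auto
          then have "dist (h ?t) 0 < e"
          proof
            assume "?t < \<eta>" then show ?thesis using d1 t02 eta h0 by (auto simp: dist_real_def)
          next
            assume "?t > 2*pi - \<eta>" then show ?thesis using d2 t02 eta h2 by (auto simp: dist_real_def)
          qed
          then show ?thesis using False by (simp add: G_def)
        qed
      qed
    qed
  qed
qed

lemma trig_approx:
  fixes h :: "real \<Rightarrow> complex"
  assumes hc: "continuous_on {0..2*pi} h" and h0: "h 0 = 0" and h2: "h (2*pi) = 0" and e: "e > 0"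
  shows "\<exists>L. \<forall>t\<in>{0..2*pi}. cmod (h t - tp L t) < e"
proof -
  define G where "G \<equiv> (\<lambda>z. if z = 1 then 0 else h (Arg2pi z))"
  have "continuous_on (sphere 0 1) G" unfolding G_def by (rule circle_cont[OF hc h0 h2])
  then obtain g where g: "polynomial_function g" "\<forall>x\<in>sphere 0 1. cmod (G x - g x) < e"
    using Stone_Weierstrass_polynomial_function[OF compact_sphere _ e] by blast
  obtain L where L: "\<forall>t. g (cis t) = tp L t" using tp_poly[OF g(1)] by blast
  have "cmod (h t - tp L t) < e" if t: "t \<in> {0..2*pi}" for t
  proof -
    have "G (cis t) = h t"
    proof (cases "t = 2*pi")
      case True then show ?thesis using h2 by (simp add: G_def)
    next
      case False
      then have "Arg2pi (exp (\<i> * complex_of_real t)) = Im (\<i> * complex_of_real t)" using t by (intro Arg2pi_exp) auto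
      then have A: "Arg2pi (cis t) = t" by (simp add: cis_conv_exp)
      show ?thesis
      proof (cases "cis t = 1")
        case True
        then have "t = 0" using A Arg2pi_eq_0[of 1] by simp
        then show ?thesis using True h0 by (simp add: G_def)
      next
        case False then show ?thesis using A by (simp add: G_def)
      qed
    qed
    then show ?thesis using g(2)[rule_format, of "cis t"] L by simp
  qed
  then show ?thesis by blast
qed



lemma sets_circ_ivl: "{0..2*pi} \<in> sets lebesgue" by simp

lemma space_circ[simp]: "space circ = {0..2*pi}" by (simp add: circ_def)

lemma fm_circ: "finite_measure circ"
  unfolding circ_def by (rule finite_measure_lebesgue_on) simp

lemma int_bdd:
  fixes f :: "real \<Rightarrow> 'b::{banach,second_countable_topology}"
  assumes "f \<in> borel_measurable circ" "AE t in circ. norm (f t) \<le> B"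
  shows "integrable circ f"
  using finite_measure.integrable_const_bound[OF fm_circ assms(2,1)] .

lemma cont_meas:
  fixes f :: "real \<Rightarrow> 'b::euclidean_space"
  assumes "continuous_on {0..2*pi} f"
  shows "f \<in> borel_measurable circ"
  unfolding circ_def by (rule continuous_imp_measurable_on_sets_lebesgue[OF assms]) simp

lemma meas_cis[measurable]: "(\<lambda>t. cis (c * t)) \<in> borel_measurable circ"
  by (rule cont_meas) (intro continuous_intros)

lemma circ_integral_hk:
  fixes f :: "real \<Rightarrow> 'b::euclidean_space"
  assumes "integrable circ f" "(f has_integral I) {0..2*pi}"
  shows "integral\<^sup>L circ f = I"
proof -
  have "(f has_integral (integral\<^sup>L circ f)) {0..2*pi}"
    using assms(1) unfolding circ_def by (intro has_integral_integral_lebesgue_on) auto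
  then show ?thesis using assms(2) has_integral_unique by blast
qed

lemma integrable_cis[simp]: "integrable circ (\<lambda>t. cis (c * t))"
  by (rule int_bdd[where B=1]) auto

lemma cis_int: "(LINT t|circ. cis (of_int k * t)) = (if k = 0 then 2*pi else 0)"
proof (cases "k = 0")
  case True
  have "((\<lambda>t. cis (of_int k * t)) has_integral (of_real (2*pi))) {0..2*pi}"
    using True has_integral_const[of "1::complex" 0 "2*pi"]
    by (simp add: scaleR_conv_of_real)
  then show ?thesis using True by (subst circ_integral_hk[OF integrable_cis]) auto
next
  case False
  define F where "F = (\<lambda>t::real. cis (of_int k * t) / (\<i> * of_int k))"
  have "((\<lambda>t. cis (of_int k * t)) has_integral (F (2*pi) - F 0)) {0..2*pi}"
  proof (rule fundamental_theorem_of_calculus)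
    show "0 \<le> 2*pi" by simp
    fix x assume "x \<in> {0..2*pi}"
    show "(F has_vector_derivative cis (of_int k * x)) (at x within {0..2*pi})"
      unfolding F_def has_vector_derivative_def
      by (rule derivative_eq_intros refl | simp add: False)+ (auto simp: fun_eq_iff scaleR_conv_of_real False algebra_simps)
  qed
  moreover have "F (2*pi) - F 0 = 0"
  proof -
    have "cis (of_int k * (2*pi)) = 1"
      by (metis cis_multiple_2pi Ints_of_int mult.commute)
    then show ?thesis by (simp add: F_def)
  qed
  ultimately show ?thesis using False by (subst circ_integral_hk[OF integrable_cis]) auto
qed



lemma borel_measurable_cnj[measurable]:
  "f \<in> borel_measurable M \<Longrightarrow> (\<lambda>t. cnj (f t)) \<in> borel_measurable M"
  by (rule measurable_compose[of f M borel, OF _ borel_measurable_continuous_onI]) (auto intro: continuous_intros)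

definition BM :: "(real \<Rightarrow> complex) \<Rightarrow> bool" where
  "BM f \<longleftrightarrow> f \<in> borel_measurable circ \<and> (\<exists>B. AE t in circ. cmod (f t) \<le> B)"

lemma BM_meas[measurable_dest]: "BM f \<Longrightarrow> f \<in> borel_measurable circ"
  by (simp add: BM_def)

lemma BM_integrable: "BM f \<Longrightarrow> integrable circ f"
  unfolding BM_def using int_bdd by fastforce

lemma BM_add: "BM f \<Longrightarrow> BM g \<Longrightarrow> BM (\<lambda>t. f t + g t)"
  unfolding BM_def
proof (elim conjE exE, intro conjI)
  fix B1 B2 assume *: "AE t in circ. cmod (f t) \<le> B1" "AE t in circ. cmod (g t) \<le> B2"
    and [measurable]: "f \<in> borel_measurable circ" "g \<in> borel_measurable circ"
  show "(\<lambda>t. f t + g t) \<in> borel_measurable circ" by measurable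
  show "\<exists>B. AE t in circ. cmod (f t + g t) \<le> B"
  proof (intro exI)
    show "AE t in circ. cmod (f t + g t) \<le> B1 + B2"
      using * by eventually_elim (rule order_trans[OF norm_triangle_ineq], simp add: add_mono)
  qed
qed

lemma BM_mult: "BM f \<Longrightarrow> BM g \<Longrightarrow> BM (\<lambda>t. f t * g t)"
  unfolding BM_def
proof (elim conjE exE, intro conjI)
  fix B1 B2 assume *: "AE t in circ. cmod (f t) \<le> B1" "AE t in circ. cmod (g t) \<le> B2"
    and [measurable]: "f \<in> borel_measurable circ" "g \<in> borel_measurable circ"
  show "(\<lambda>t. f t * g t) \<in> borel_measurable circ" by measurable
  show "\<exists>B. AE t in circ. cmod (f t * g t) \<le> B"
  proof (intro exI)
    show "AE t in circ. cmod (f t * g t) \<le> B1 * B2"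
      using * by eventually_elim (auto simp: norm_mult intro!: mult_mono order_trans[OF norm_ge_zero])
  qed
qed

lemma BM_cnj: "BM f \<Longrightarrow> BM (\<lambda>t. cnj (f t))"
  unfolding BM_def by auto

lemma BM_const: "BM (\<lambda>t. c)"
  unfolding BM_def by auto

lemma BM_minus: "BM f \<Longrightarrow> BM (\<lambda>t. - f t)"
  unfolding BM_def by auto

lemma BM_diff: "BM f \<Longrightarrow> BM g \<Longrightarrow> BM (\<lambda>t. f t - g t)"
  using BM_add[OF _ BM_minus[of g]] by simp

lemma BM_cis: "BM (\<lambda>t. cis (c * t))"
  unfolding BM_def by auto

lemma cont_tp: "continuous_on A (tp L)"
  by (induction L) (auto intro!: continuous_intros)

lemma bdd_tp: "cmod (tp L t) \<le> (\<Sum>(c,m)\<leftarrow>L. cmod c)"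
proof (induction L)
  case (Cons a L) then show ?case
    by (cases a) (auto intro!: order_trans[OF norm_triangle_ineq] simp: norm_mult)
qed simp

lemma BM_tp: "BM (tp L)"
  unfolding BM_def using cont_meas[OF cont_tp] bdd_tp by blast

lemma BM_integrable_sq: "BM f \<Longrightarrow> integrable circ (\<lambda>t. (cmod (f t))^2)"
  unfolding BM_def
proof (elim conjE exE)
  fix B assume *: "AE t in circ. cmod (f t) \<le> B" and [measurable]: "f \<in> borel_measurable circ"
  show ?thesis
    by (rule int_bdd[where B="B^2"]) (use * in \<open>auto elim!: eventually_mono intro: power_mono\<close>)
qed

lemma BM_integrable_Re: "BM f \<Longrightarrow> integrable circ (\<lambda>t. Re (f t))"
  using BM_integrable integrable_Re by blast

lemma fc_int: "BM f \<Longrightarrow> (LINT t|circ. f t * cis (- (of_int m * t))) = 2 * pi * fourier_coeff f m"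
  by (simp add: fourier_coeff_def)

lemma cis_tp_int:
  fixes L :: "(complex \<times> int) list"
  shows "(LINT t|circ. tp L t * cis (- (of_int m * t))) = 2 * pi * (\<Sum>(c,j)\<leftarrow>L. if j = m then c else 0)"
proof (induction L)
  case Nil then show ?case by simp
next
  case (Cons a L)
  obtain c j where a: "a = (c,j)" by force
  have e: "(c * cis (of_int j * t) + tp L t) * cis (- (of_int m * t)) = c * cis (of_int (j - m) * t) + tp L t * cis (- (of_int m * t))" for t
    by (simp add: algebra_simps cis_mult)
  have i1: "integrable circ (\<lambda>t. c * cis (of_int (j - m) * t))" by simp
  have i2: "integrable circ (\<lambda>t. tp L t * cis (- (of_int m * t)))"
    using BM_integrable[OF BM_mult[OF BM_tp BM_cis[of "- of_int m"]]] by simp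
  show ?case
    unfolding a tp_Cons e Bochner_Integration.integral_add[OF i1 i2] Cons
    using cis_int[of "j - m"] by (simp add: algebra_simps)
qed

definition PL :: "int \<Rightarrow> (real \<Rightarrow> complex) \<Rightarrow> (complex \<times> int) list" where
  "PL N f = map (\<lambda>k. (fourier_coeff f k, k)) [-N..N]"

lemma sum_PL: "\<bar>m\<bar> \<le> N \<Longrightarrow> (\<Sum>(c,j)\<leftarrow>PL N f. if j = m then c else 0) = fourier_coeff f m"
proof -
  assume m: "\<bar>m\<bar> \<le> N"
  have "(\<Sum>(c,j)\<leftarrow>PL N f. if j = m then c else 0) = (\<Sum>k\<leftarrow>[-N..N]. if k = m then fourier_coeff f k else 0)"
    by (simp add: PL_def o_def)
  also have "\<dots> = (\<Sum>k\<in>{-N..N}. if k = m then fourier_coeff f k else 0)"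
    by (simp add: sum_list_distinct_conv_sum_set)
  also have "\<dots> = fourier_coeff f m" using m by (simp add: abs_le_iff)
  finally show ?thesis .
qed

lemma orth_PL:
  assumes f: "BM f" and m: "\<bar>m\<bar> \<le> N"
  shows "(LINT t|circ. (f t - tp (PL N f) t) * cis (- (of_int m * t))) = 0"
proof -
  have i1: "integrable circ (\<lambda>t. f t * cis (- (of_int m * t)))"
    using BM_integrable[OF BM_mult[OF f BM_cis[of "- of_int m"]]] by simp
  have i2: "integrable circ (\<lambda>t. tp (PL N f) t * cis (- (of_int m * t)))"
    using BM_integrable[OF BM_mult[OF BM_tp BM_cis[of "- of_int m"]]] by simp
  have "(LINT t|circ. (f t - tp (PL N f) t) * cis (- (of_int m * t)))
      = (LINT t|circ. f t * cis (- (of_int m * t))) - (LINT t|circ. tp (PL N f) t * cis (- (of_int m * t)))"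
    by (subst Bochner_Integration.integral_diff[OF i1 i2, symmetric]) (simp add: algebra_simps)
  also have "\<dots> = 0" using fc_int[OF f] cis_tp_int sum_PL[OF m] by simp
  finally show ?thesis .
qed

lemma orth_tp:
  assumes a: "BM a" and orth: "\<And>m. \<bar>m\<bar> \<le> N \<Longrightarrow> (LINT t|circ. a t * cis (- (of_int m * t))) = 0"
    and L: "\<forall>j\<in>snd ` set L. \<bar>j\<bar> \<le> N"
  shows "(LINT t|circ. a t * cnj (tp L t)) = 0"
  using L
proof (induction L)
  case Nil then show ?case by simp
next
  case (Cons p L)
  obtain c j where p: "p = (c,j)" by force
  have e: "a t * cnj (tp (p # L) t) = cnj c * (a t * cis (- (of_int j * t))) + a t * cnj (tp L t)" for t
    by (simp add: p algebra_simps cis_cnj)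
  have i1: "integrable circ (\<lambda>t. cnj c * (a t * cis (- (of_int j * t))))"
    using BM_integrable[OF BM_mult[OF BM_const BM_mult[OF a BM_cis[of "- of_int j"]]]] by simp
  have i2: "integrable circ (\<lambda>t. a t * cnj (tp L t))"
    using BM_integrable[OF BM_mult[OF a BM_cnj[OF BM_tp]]] by simp
  have "\<bar>j\<bar> \<le> N" using Cons.prems p by auto
  then show ?case
    unfolding e Bochner_Integration.integral_add[OF i1 i2] using Cons orth by simp
qed

lemma pyth:
  assumes a: "BM a" and b: "BM b" and o: "(LINT t|circ. a t * cnj (b t)) = 0"
  shows "(LINT t|circ. (cmod (a t + b t))^2) = (LINT t|circ. (cmod (a t))^2) + (LINT t|circ. (cmod (b t))^2)"
proof -
  have e: "(cmod (a t + b t))^2 = (cmod (a t))^2 + (cmod (b t))^2 + 2 * Re (a t * cnj (b t))" for t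
    unfolding cmod_power2 by (simp add: algebra_simps power2_eq_square)
  have i3: "integrable circ (\<lambda>t. 2 * Re (a t * cnj (b t)))"
    by (rule integrable_mult_right) (rule BM_integrable_Re[OF BM_mult[OF a BM_cnj[OF b]]])
  have "(LINT t|circ. 2 * Re (a t * cnj (b t))) = 2 * Re (LINT t|circ. a t * cnj (b t))"
    unfolding integral_mult_right_zero integral_Re[OF BM_integrable[OF BM_mult[OF a BM_cnj[OF b]]]] ..
  then have "(LINT t|circ. 2 * Re (a t * cnj (b t))) = 0" using o by simp
  then show ?thesis
    unfolding e using BM_integrable_sq[OF a] BM_integrable_sq[OF b] i3 by simp
qed

lemma proj_best:
  assumes f: "BM f" and L: "\<forall>j\<in>snd ` set L. \<bar>j\<bar> \<le> N"
  shows "(LINT t|circ. (cmod (f t - tp (PL N f) t))^2) \<le> (LINT t|circ. (cmod (f t - tp L t))^2)"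
proof -
  let ?a = "\<lambda>t. f t - tp (PL N f) t" and ?b = "\<lambda>t. tp (PL N f) t - tp L t"
  have a: "BM ?a" by (intro BM_diff f BM_tp)
  have b: "BM ?b" by (intro BM_diff BM_tp)
  have orth: "(LINT t|circ. ?a t * cis (- (of_int m * t))) = 0" if "\<bar>m\<bar> \<le> N" for m
    using orth_PL[OF f that] .
  have L2: "\<forall>j\<in>snd ` set (PL N f). \<bar>j\<bar> \<le> N" by (auto simp: PL_def)
  have i: "integrable circ (\<lambda>t. ?a t * cnj (tp L' t))" for L'
    using BM_integrable[OF BM_mult[OF a BM_cnj[OF BM_tp]]] .
  have ee: "?a t * cnj (?b t) = ?a t * cnj (tp (PL N f) t) - ?a t * cnj (tp L t)" for t
    by (simp add: algebra_simps)
  have "(LINT t|circ. ?a t * cnj (?b t)) = (LINT t|circ. ?a t * cnj (tp (PL N f) t)) - (LINT t|circ. ?a t * cnj (tp L t))"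
    unfolding ee by (rule Bochner_Integration.integral_diff[OF i i])
  also have "\<dots> = 0" using orth_tp[OF a orth L2] orth_tp[OF a orth L] by simp
  finally have "(LINT t|circ. ?a t * cnj (?b t)) = 0" .
  from pyth[OF a b this] have "(LINT t|circ. (cmod (?a t + ?b t))^2) = (LINT t|circ. (cmod (?a t))^2) + (LINT t|circ. (cmod (?b t))^2)" .
  moreover have "(LINT t|circ. (cmod (?b t))^2) \<ge> 0" by (rule integral_nonneg_AE) auto
  moreover have "?a t + ?b t = f t - tp L t" for t by simp
  ultimately show ?thesis by simp
qed



lemma AE_circ_negligible:
  assumes "negligible N"
  shows "AE t in circ. t \<notin> N"
proof -
  have "negligible (N \<inter> {0..2*pi})" using assms by (rule negligible_subset) auto
  then have "N \<inter> {0..2*pi} \<in> null_sets lebesgue" by (simp add: negligible_iff_null_sets)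
  moreover have "N \<inter> {0..2*pi} \<in> null_sets (lebesgue_on {0..2*pi}) \<longleftrightarrow> N \<inter> {0..2*pi} \<subseteq> {0..2*pi} \<and> N \<inter> {0..2*pi} \<in> null_sets lebesgue"
    by (rule null_sets_restrict_space) simp
  ultimately have "N \<inter> {0..2*pi} \<in> null_sets (lebesgue_on {0..2*pi})" by blast
  then have "N \<inter> {0..2*pi} \<in> null_sets circ" unfolding circ_def .
  then have "AE t in circ. t \<notin> N \<inter> {0..2*pi}" by (rule AE_not_in)
  moreover have "AE t in circ. t \<in> {0..2*pi}" using AE_space[of circ] by simp
  ultimately show ?thesis by eventually_elim auto
qed

lemma AE_circ_space: "AE t in circ. t \<in> {0..2*pi}"
  using AE_space[of circ] by simp

lemma integral_circ_const: "(LINT t|circ. (c::real)) = 2*pi*c"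
proof -
  have i: "integrable circ (\<lambda>t. c)" using finite_measure.integrable_const[OF fm_circ] .
  show ?thesis by (rule circ_integral_hk[OF i]) (use has_integral_const_real[of c 0 "2*pi"] in simp)
qed

lemma cont_approx:
  assumes f: "BM f" and e: "e > 0"
  shows "\<exists>h. continuous_on {0..2*pi} h \<and> h 0 = 0 \<and> h (2*pi) = 0 \<and>
    (LINT t|circ. (cmod (f t - h t))^2) < e"
proof -
  have [measurable]: "f \<in> borel_measurable circ" using f by (simp add: BM_def)
  obtain B0 where B0: "AE t in circ. cmod (f t) \<le> B0" using f by (auto simp: BM_def)
  define B where "B = max B0 1"
  have Bpos: "B > 0" by (simp add: B_def)
  have fB: "AE t in circ. cmod (f t) \<le> B" using B0 by (rule eventually_mono) (simp add: B_def)
  have "f measurable_on {0..2*pi}"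
    using measurable_on_iff_borel_measurable[of "{0..2*pi}" f] \<open>f \<in> borel_measurable circ\<close>
    by (simp add: circ_def)
  then obtain N g where N: "negligible N" and gc: "\<And>n. continuous_on UNIV (g n)"
    and gl: "\<And>x. x \<notin> N \<Longrightarrow> (\<lambda>n. g n x) \<longlonglongrightarrow> (if x \<in> {0..2*pi} then f x else 0)"
    unfolding measurable_on_def by blast
  define T where "T = (\<lambda>z::complex. z / complex_of_real (max 1 (cmod z / B)))"
  have Tc: "continuous_on UNIV T" unfolding T_def
    using Bpos by (intro continuous_intros) auto
  have Tid: "T z = z" if "cmod z \<le> B" for z
    using that Bpos by (simp add: T_def max_def divide_le_eq_1)
  have TB: "cmod (T z) \<le> B" for z
  proof (cases "cmod z \<le> B")
    case True then show ?thesis using Tid by simp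
  next
    case False
    then have m: "max 1 (cmod z / B) = cmod z / B" using Bpos by (simp add: max_def divide_le_eq_1)
    have z0: "cmod z > 0" using False Bpos by linarith
    have "cmod (T z) = cmod z / \<bar>cmod z / B\<bar>" by (simp only: T_def norm_divide m norm_of_real)
    also have "\<dots> = B" using z0 Bpos by simp
    finally show ?thesis by simp
  qed
  define chi where "chi = (\<lambda>(n::nat) (t::real). min 1 (real n * t * (2*pi - t)))"
  define h where "h = (\<lambda>n t. complex_of_real (chi n t) * T (g n t))"
  have hc: "continuous_on {0..2*pi} (h n)" for n
  proof -
    have "continuous_on {0..2*pi} (\<lambda>t. T (g n t))"
      using continuous_on_compose2[OF Tc gc] continuous_on_subset by blast
    then show ?thesis unfolding h_def chi_def by (intro continuous_intros) auto
  qed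
  have h0: "h n 0 = 0" "h n (2*pi) = 0" for n by (auto simp: h_def chi_def)
  have chi01: "0 \<le> chi n t \<and> chi n t \<le> 1" if "t \<in> {0..2*pi}" for n t
    using that unfolding chi_def by (auto simp: min_def)
  have hB: "cmod (h n t) \<le> B" if "t \<in> {0..2*pi}" for n t
  proof -
    have "cmod (h n t) = \<bar>chi n t\<bar> * cmod (T (g n t))" by (simp add: h_def norm_mult)
    also have "\<dots> \<le> 1 * B" using chi01[OF that, of n] TB by (intro mult_mono) auto
    finally show ?thesis by simp
  qed
  have [measurable]: "h n \<in> borel_measurable circ" for n by (rule cont_meas[OF hc])
  have ne: "negligible {0, 2*pi}" by simp
  have lim: "AE t in circ. (\<lambda>n. (cmod (f t - h n t))^2) \<longlonglongrightarrow> 0"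
    using AE_circ_negligible[OF N] AE_circ_negligible[OF ne] AE_circ_space fB
  proof eventually_elim
    case (elim t)
    then have t: "0 < t" "t < 2*pi" by auto
    have "(\<lambda>n. T (g n t)) \<longlonglongrightarrow> T (f t)"
      using gl[OF elim(1)] elim(3) Tc continuous_on_tendsto_compose[OF Tc] by auto
    then have gT: "(\<lambda>n. T (g n t)) \<longlonglongrightarrow> f t" using Tid elim(4) by simp
    have "eventually (\<lambda>n. chi n t = 1) sequentially"
    proof -
      have c: "t * (2*pi - t) > 0" using t by simp
      obtain n0::nat where "real n0 > 1 / (t * (2*pi - t))" using reals_Archimedean2 by blast
      then have "real n * t * (2*pi - t) \<ge> 1" if "n \<ge> n0" for n
      proof -
        have "1 \<le> real n0 * (t * (2*pi - t))" using \<open>real n0 > _\<close> c by (simp add: field_simps)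
        also have "\<dots> \<le> real n * (t * (2*pi - t))" using that c by (intro mult_right_mono) auto
        finally show ?thesis by (simp add: mult.assoc)
      qed
      then show ?thesis unfolding chi_def eventually_sequentially by (auto simp: min_def)
    qed
    then have "eventually (\<lambda>n. complex_of_real (chi n t) = 1) sequentially"
      by (rule eventually_mono) simp
    then have "(\<lambda>n. complex_of_real (chi n t)) \<longlonglongrightarrow> 1"
      by (rule tendsto_eventually)
    then have "(\<lambda>n. h n t) \<longlonglongrightarrow> 1 * f t" unfolding h_def by (intro tendsto_mult gT)
    then have "(\<lambda>n. f t - h n t) \<longlonglongrightarrow> f t - 1 * f t" by (intro tendsto_diff tendsto_const)
    then have "(\<lambda>n. f t - h n t) \<longlonglongrightarrow> 0" by simp
    then have "(\<lambda>n. cmod (f t - h n t)) \<longlonglongrightarrow> 0" by (rule tendsto_norm_zero)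
    then have "(\<lambda>n. (cmod (f t - h n t))^2) \<longlonglongrightarrow> 0^2" by (rule tendsto_power)
    then show ?case by simp
  qed
  have "(\<lambda>n. LINT t|circ. (cmod (f t - h n t))^2) \<longlonglongrightarrow> (LINT t|circ. (0::real))"
  proof (rule integral_dominated_convergence[where w="\<lambda>t. (2*B)^2"])
    show "integrable circ (\<lambda>t. (2*B)^2)" by (rule int_bdd[where B="(2*B)^2"]) auto
    show "AE t in circ. (\<lambda>n. (cmod (f t - h n t))^2) \<longlonglongrightarrow> 0" by (rule lim)
    show "AE t in circ. norm ((cmod (f t - h n t))^2) \<le> (2*B)^2" for n
      using fB AE_circ_space
    proof eventually_elim
      case (elim t)
      have "cmod (f t - h n t) \<le> cmod (f t) + cmod (h n t)" by (rule norm_triangle_ineq4)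
      also have "\<dots> \<le> 2*B" using elim hB[of t n] by simp
      finally have "(cmod (f t - h n t))^2 \<le> (2*B)^2" by (intro power_mono) auto
      then show ?case by simp
    qed
  qed auto
  then have "(\<lambda>n. LINT t|circ. (cmod (f t - h n t))^2) \<longlonglongrightarrow> 0" by simp
  then obtain n where "(LINT t|circ. (cmod (f t - h n t))^2) < e"
  proof -
    from order_tendstoD(2)[OF \<open>_ \<longlonglongrightarrow> 0\<close> e] obtain n0 where "\<And>n. n \<ge> n0 \<Longrightarrow> (LINT t|circ. (cmod (f t - h n t))^2) < e"
      unfolding eventually_sequentially by blast
    then show ?thesis using that by blast
  qed
  then show ?thesis using hc h0 by blast
qed

lemma sq_tri: "(cmod (a + b))^2 \<le> 2 * (cmod a)^2 + 2 * (cmod b)^2"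
proof -
  have "(cmod (a + b))^2 \<le> (cmod a + cmod b)^2"
    by (intro power_mono norm_triangle_ineq) auto
  also have "\<dots> \<le> 2 * (cmod a)^2 + 2 * (cmod b)^2"
    using zero_le_square[of "cmod a - cmod b"] by (simp add: power2_eq_square algebra_simps)
  finally show ?thesis .
qed

lemma density:
  assumes f: "BM f" and e: "e > 0"
  shows "\<exists>L. (LINT t|circ. (cmod (f t - tp L t))^2) < e"
proof -
  obtain h where hc: "continuous_on {0..2*pi} h" and h0: "h 0 = 0" "h (2*pi) = 0"
    and hI: "(LINT t|circ. (cmod (f t - h t))^2) < e/4"
    using cont_approx[OF f, of "e/4"] e by auto
  define \<epsilon> where "\<epsilon> = min 1 (e / (8*pi))"
  have ep: "\<epsilon> > 0" "\<epsilon> \<le> 1" "\<epsilon> \<le> e / (8*pi)" using e by (auto simp: \<epsilon>_def)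
  obtain L where L: "\<forall>t\<in>{0..2*pi}. cmod (h t - tp L t) < \<epsilon>"
    using trig_approx[OF hc h0 ep(1)] by blast
  have hBM: "BM h" unfolding BM_def
  proof
    show "h \<in> borel_measurable circ" by (rule cont_meas[OF hc])
    obtain M where hM: "\<forall>x\<in>{0..2*pi}. norm (h x) \<le> M"
      using compact_imp_bounded[OF compact_continuous_image[OF hc compact_Icc]]
      by (auto simp: bounded_iff)
    have "AE t in circ. cmod (h t) \<le> M" using AE_circ_space by eventually_elim (use hM in auto)
    then show "\<exists>B. AE t in circ. cmod (h t) \<le> B" by blast
  qed
  have i1: "integrable circ (\<lambda>t. (cmod (f t - tp L t))^2)" by (intro BM_integrable_sq BM_diff f BM_tp)
  have i2: "integrable circ (\<lambda>t. 2 * (cmod (f t - h t))^2 + 2 * (cmod (h t - tp L t))^2)"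
    by (intro Bochner_Integration.integrable_add integrable_mult_right BM_integrable_sq BM_diff f BM_tp hBM)
  have "(LINT t|circ. (cmod (f t - tp L t))^2) \<le> (LINT t|circ. 2 * (cmod (f t - h t))^2 + 2 * (cmod (h t - tp L t))^2)"
  proof (rule integral_mono[OF i1 i2])
    fix t
    show "(cmod (f t - tp L t))^2 \<le> 2 * (cmod (f t - h t))^2 + 2 * (cmod (h t - tp L t))^2"
      using sq_tri[of "f t - h t" "h t - tp L t"] by simp
  qed
  also have "\<dots> = 2 * (LINT t|circ. (cmod (f t - h t))^2) + 2 * (LINT t|circ. (cmod (h t - tp L t))^2)"
    by (subst Bochner_Integration.integral_add) (auto intro!: integrable_mult_right BM_integrable_sq BM_diff f BM_tp hBM)
  also have "(LINT t|circ. (cmod (h t - tp L t))^2) \<le> (LINT t|circ. \<epsilon>^2)"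
  proof (rule integral_mono)
    show "integrable circ (\<lambda>t. (cmod (h t - tp L t))^2)" by (intro BM_integrable_sq BM_diff BM_tp hBM)
    show "integrable circ (\<lambda>t. \<epsilon>^2)" by (rule int_bdd[where B="\<epsilon>^2"]) auto
    show "(cmod (h t - tp L t))^2 \<le> \<epsilon>^2" if "t \<in> space circ" for t
      using L that by (intro power_mono) (auto simp: less_imp_le)
  qed
  also have "(LINT t|circ. \<epsilon>^2) = 2*pi*\<epsilon>^2" by (rule integral_circ_const)
  also have "2*pi*\<epsilon>^2 \<le> 2*pi*\<epsilon>"
    using ep by (intro mult_left_mono) (auto simp: power2_eq_square mult_le_cancel_left1)
  also have "2*pi*\<epsilon> \<le> e/4" using ep(3) by (simp add: field_simps)
  finally show ?thesis using hI by (intro exI[of _ L]) linarith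
qed



lemma tp_h_int:
  fixes L :: "(complex \<times> int) list"
  assumes h: "BM h"
  shows "(LINT t|circ. tp L t * h t) = 2 * pi * (\<Sum>(c,k)\<leftarrow>L. c * fourier_coeff h (- k))"
proof (induction L)
  case Nil then show ?case by simp
next
  case (Cons p L)
  obtain c k where p: "p = (c,k)" by force
  have e: "tp (p # L) t * h t = c * (h t * cis (- (of_int (- k) * t))) + tp L t * h t" for t
    by (simp add: p algebra_simps)
  have i1: "integrable circ (\<lambda>t. c * (h t * cis (- (of_int (- k) * t))))"
    using BM_integrable[OF BM_mult[OF BM_const BM_mult[OF h BM_cis[of "- of_int (- k)"]]]] by simp
  have i2: "integrable circ (\<lambda>t. tp L t * h t)"
    using BM_integrable[OF BM_mult[OF BM_tp h]] by simp
  show ?case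
    unfolding e Bochner_Integration.integral_add[OF i1 i2] Cons integral_mult_right_zero fc_int[OF h]
    by (simp add: p algebra_simps)
qed

lemma measure_circ: "measure circ {0..2*pi} = 2*pi"
  using integral_circ_const[of 1] by simp

lemma Linf_BM: "f \<in> Linf \<Longrightarrow> BM f"
proof -
  assume f: "f \<in> Linf"
  then have m: "f \<in> borel_measurable circ" and S: "sup_norm f < \<infinity>" by (auto simp: Linf_def)
  have "AE t in circ. ereal (cmod (f t)) \<le> sup_norm f"
    unfolding sup_norm_def by (rule esssup_AE)
  then have "AE t in circ. cmod (f t) \<le> real_of_ereal (sup_norm f)"
  proof (rule eventually_mono)
    fix t assume "ereal (cmod (f t)) \<le> sup_norm f"
    then show "cmod (f t) \<le> real_of_ereal (sup_norm f)" using S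
      by (cases "sup_norm f") auto
  qed
  then show "BM f" using m unfolding BM_def by blast
qed

lemma BM_Linf: "BM f \<Longrightarrow> f \<in> Linf"
proof -
  assume "BM f"
  then obtain B where [measurable]: "f \<in> borel_measurable circ" and B: "AE t in circ. cmod (f t) \<le> B"
    by (auto simp: BM_def)
  have "sup_norm f \<le> ereal B" unfolding sup_norm_def
    by (rule esssup_I) (use B in \<open>auto elim: eventually_mono\<close>)
  then show "f \<in> Linf" unfolding Linf_def by (auto simp: le_less_trans)
qed

lemma small_zero:
  fixes x :: complex and C :: real
  assumes C: "C \<ge> 0" and b: "\<And>e. e > 0 \<Longrightarrow> cmod x \<le> C * e"
  shows "x = 0"
proof (rule ccontr)
  assume "x \<noteq> 0"
  then have x: "cmod x > 0" by simp
  have "cmod x \<le> C * (cmod x / (C + 1))" using b[of "cmod x / (C+1)"] x C by simp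
  also have "\<dots> < cmod x" using x C by (simp add: field_simps)
  finally show False by simp
qed

lemma key:
  assumes f: "BM f" and fneg: "\<And>k. k < 0 \<Longrightarrow> fourier_coeff f k = 0"
    and h: "BM h" and hpos: "\<And>m. m \<le> 0 \<Longrightarrow> fourier_coeff h m = 0"
  shows "(LINT t|circ. f t * h t) = 0"
proof -
  obtain B0 where B0: "AE t in circ. cmod (h t) \<le> B0" using h by (auto simp: BM_def)
  define Bh where "Bh = max B0 0"
  have Bh: "AE t in circ. cmod (h t) \<le> Bh" "Bh \<ge> 0" using B0 by (auto simp: Bh_def elim: eventually_mono)
  have P0: "(LINT t|circ. tp (PL N f) t * h t) = 0" for N
  proof -
    have z: "(\<lambda>k. fourier_coeff f k * fourier_coeff h (- k)) = (\<lambda>k. 0)"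
    proof
      fix k :: int show "fourier_coeff f k * fourier_coeff h (- k) = 0"
        by (cases "k < 0") (auto simp: fneg hpos)
    qed
    show ?thesis unfolding tp_h_int[OF h] by (simp add: PL_def o_def z)
  qed
  show ?thesis
  proof (rule small_zero[where C="Bh * (2*pi + 1)"])
    show "Bh * (2*pi+1) \<ge> 0" using Bh by simp
    fix e :: real assume e: "e > 0"
    obtain L where L: "(LINT t|circ. (cmod (f t - tp L t))^2) < e^2"
      using density[OF f, of "e^2"] e by auto
    define N where "N = Max (insert 0 ((\<lambda>p. \<bar>snd p\<bar>) ` set L))"
    have LN: "\<forall>j\<in>snd ` set L. \<bar>j\<bar> \<le> N" unfolding N_def by (auto intro: Max_ge)
    define a where "a = (\<lambda>t. f t - tp (PL N f) t)"
    have a: "BM a" unfolding a_def by (intro BM_diff f BM_tp)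
    have aL2: "(LINT t|circ. (cmod (a t))^2) \<le> e^2"
      using proj_best[OF f LN] L unfolding a_def by linarith
    have "(LINT t|circ. f t * h t) = (LINT t|circ. a t * h t) + (LINT t|circ. tp (PL N f) t * h t)"
      unfolding a_def
      by (subst Bochner_Integration.integral_add[symmetric])
         (auto intro!: BM_integrable BM_mult BM_diff f h BM_tp simp: algebra_simps)
    then have eq: "(LINT t|circ. f t * h t) = (LINT t|circ. a t * h t)" using P0 by simp
    have "cmod (LINT t|circ. a t * h t) \<le> (LINT t|circ. cmod (a t * h t))"
      by (rule integral_norm_bound)
    also have "\<dots> \<le> (LINT t|circ. Bh * (e + (cmod (a t))^2 / e))"
    proof (rule integral_mono_AE)
      show "integrable circ (\<lambda>t. cmod (a t * h t))"
        by (intro integrable_norm BM_integrable BM_mult a h)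
      show "integrable circ (\<lambda>t. Bh * (e + (cmod (a t))^2 / e))"
        by (intro integrable_mult_right Bochner_Integration.integrable_add integrable_divide_zero BM_integrable_sq a)
           (rule int_bdd[where B=e], use e in auto)
      show "AE t in circ. cmod (a t * h t) \<le> Bh * (e + (cmod (a t))^2 / e)"
        using Bh(1)
      proof eventually_elim
        case (elim t)
        have ae: "cmod (a t) \<le> e + (cmod (a t))^2 / e"
        proof (cases "cmod (a t) \<le> e")
          case True then show ?thesis using e by (simp add: add_increasing2)
        next
          case False
          then have "cmod (a t) * e \<le> (cmod (a t))^2" by (simp add: power2_eq_square mult_left_mono)
          then have "cmod (a t) \<le> (cmod (a t))^2 / e" using e by (simp add: field_simps)
          then show ?thesis using e by linarith
        qed
        have "cmod (a t * h t) = cmod (h t) * cmod (a t)" by (simp add: norm_mult)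
        also have "\<dots> \<le> Bh * (e + (cmod (a t))^2 / e)"
          using elim Bh(2) ae by (intro mult_mono) auto
        finally show ?case .
      qed
    qed
    also have "\<dots> = Bh * (2*pi*e + (LINT t|circ. (cmod (a t))^2) / e)"
    proof -
      have "(LINT t|circ. e + (cmod (a t))^2 / e) = (LINT t|circ. e) + (LINT t|circ. (cmod (a t))^2 / e)"
        using e by (intro Bochner_Integration.integral_add integrable_divide_zero BM_integrable_sq a int_bdd[where B=e]) auto
      then show ?thesis by (simp add: integral_circ_const measure_circ)
    qed
    also have "\<dots> \<le> Bh * (2*pi*e + e)"
    proof -
      have "(LINT t|circ. (cmod (a t))^2) / e \<le> e^2 / e" using aL2 e by (intro divide_right_mono) auto
      then show ?thesis using Bh(2) e by (intro mult_left_mono) (auto simp: power2_eq_square)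
    qed
    also have "\<dots> = Bh * (2*pi+1) * e" by (simp add: algebra_simps)
    finally show "cmod (LINT t|circ. f t * h t) \<le> Bh * (2*pi+1) * e" using eq by simp
  qed
qed

lemma Hinf0_mult:
  assumes f: "f \<in> Hinf" and g: "g \<in> Hinf0"
  shows "(\<lambda>t. f t * g t) \<in> Hinf0"
proof -
  have fB: "BM f" using f by (auto simp: Hinf_def intro: Linf_BM)
  have gB: "BM g" using g by (auto simp: Hinf0_def Hinf_def intro: Linf_BM)
  have gz: "fourier_coeff g m = 0" if "m \<le> 0" for m
    using g that by (cases "m = 0") (auto simp: Hinf0_def Hinf_def)
  have fn: "fourier_coeff f k = 0" if "k < 0" for k using f that by (auto simp: Hinf_def)
  have z: "fourier_coeff (\<lambda>t. f t * g t) n = 0" if n: "n \<le> 0" for n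
  proof -
    define h where "h = (\<lambda>t. g t * cis (- (of_int n * t)))"
    have hB: "BM h" unfolding h_def by (intro BM_mult gB BM_cis[of "- of_int n", simplified])
    have hz: "fourier_coeff h m = 0" if "m \<le> 0" for m
    proof -
      have "h t * cis (- (of_int m * t)) = g t * cis (- (of_int (n + m) * t))" for t
        by (simp add: h_def cis_mult algebra_simps)
      then have "fourier_coeff h m = fourier_coeff g (n + m)" by (simp add: fourier_coeff_def)
      then show ?thesis using gz n that by simp
    qed
    have "(LINT t|circ. f t * h t) = 0" by (rule key[OF fB fn hB hz])
    then show ?thesis by (simp add: fourier_coeff_def h_def mult.assoc)
  qed
  have "(\<lambda>t. f t * g t) \<in> Linf" by (intro BM_Linf BM_mult fB gB)
  then show ?thesis using z by (auto simp: Hinf0_def Hinf_def)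
qed

lemma zero_Hinf0: "(\<lambda>t. 0) \<in> Hinf0"
proof -
  have "(\<lambda>t. 0) \<in> Linf" by (intro BM_Linf BM_const)
  then show ?thesis by (simp add: Hinf0_def Hinf_def fourier_coeff_def)
qed

lemma saturated_iff:
  "saturated \<phi> \<longleftrightarrow> (\<forall>f\<in>Hinf0. sup_norm \<phi> \<le> sup_norm (\<lambda>t. \<phi> t - cnj (f t)))"
proof -
  have "(INF f\<in>Hinf0. sup_norm (\<lambda>t. \<phi> t - cnj (f t))) \<le> sup_norm \<phi>"
    using INF_lower[OF zero_Hinf0, of "\<lambda>f. sup_norm (\<lambda>t. \<phi> t - cnj (f t))"] by simp
  then show ?thesis unfolding saturated_def
    by (metis (no_types, lifting) INF_greatest le_INF_iff order_antisym)
qed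

theorem lemma2:
  fixes \<phi> I :: "real \<Rightarrow> complex"
  assumes "\<phi> \<in> Hinf" and "saturated \<phi>" and "inner_fun I"
  shows "saturated (\<lambda>t. I t * \<phi> t)"
proof -
  have IH: "I \<in> Hinf" and I1: "AE t in circ. cmod (I t) = 1" using assms(3) by (auto simp: inner_fun_def)
  have [measurable]: "I \<in> borel_measurable circ" using IH by (auto simp: Hinf_def Linf_def)
  have [measurable]: "\<phi> \<in> borel_measurable circ" using assms(1) by (auto simp: Hinf_def Linf_def)
  have sat: "sup_norm \<phi> \<le> sup_norm (\<lambda>t. \<phi> t - cnj (f t))" if "f \<in> Hinf0" for f
    using assms(2) that by (auto simp: saturated_iff)
  have n1: "sup_norm (\<lambda>t. I t * \<phi> t) = sup_norm \<phi>"
    unfolding sup_norm_def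
    by (rule esssup_AE_cong) (use I1 in \<open>auto elim!: eventually_mono simp: norm_mult\<close>)
  show ?thesis unfolding saturated_iff
  proof
    fix f assume f: "f \<in> Hinf0"
    then have [measurable]: "f \<in> borel_measurable circ" by (auto simp: Hinf0_def Hinf_def Linf_def)
    have If: "(\<lambda>t. I t * f t) \<in> Hinf0" by (rule Hinf0_mult[OF IH f])
    have "sup_norm (\<lambda>t. I t * \<phi> t - cnj (f t)) = sup_norm (\<lambda>t. \<phi> t - cnj (I t * f t))"
      unfolding sup_norm_def
    proof (rule esssup_AE_cong)
      show "AE t in circ. ereal (cmod (I t * \<phi> t - cnj (f t))) = ereal (cmod (\<phi> t - cnj (I t * f t)))"
        using I1
      proof (rule eventually_mono)
        fix t assume It: "cmod (I t) = 1"
        then have "I t * cnj (I t) = 1" by (metis complex_norm_square mult.commute of_real_1 power_one)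
        then have "I t * \<phi> t - cnj (f t) = I t * (\<phi> t - cnj (I t * f t))"
          by (simp add: algebra_simps)
        then show "ereal (cmod (I t * \<phi> t - cnj (f t))) = ereal (cmod (\<phi> t - cnj (I t * f t)))"
          using It by (simp add: norm_mult)
      qed
    qed auto
    then show "sup_norm (\<lambda>t. I t * \<phi> t) \<le> sup_norm (\<lambda>t. I t * \<phi> t - cnj (f t))"
      using n1 sat[OF If] by simp
  qed
qed


end
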